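(* Let $p$ be an odd prime and let $k$ be an integer with $2\le k\le p-1$. Let $k^{-1}$ denote the least non-negative integer congruent to the inverse of $k$ modulo $p$, and let $K=\min\{k,k^{-1}\}$. Let $\phi$ be the orthomorphism of $\mathbb{Z}_p$ given by $\phi(x)=kx$, and let $\phi'$ be any orthomorphism of $\mathbb{Z}_p$ with $\phi'\neq\phi$. Then the number of $x\in\mathbb{Z}_p$ with $\phi(x)\neq\phi'(x)$ is at least $\log_K(p)+1$.
   Context: An orthomorphism of the cyclic group $\mathbb{Z}_p$ is a permutation $\psi$ of $\mathbb{Z}_p$ such that the map $x\mapsto \psi(x)-x$ (computed modulo $p$) is also a permutation of $\mathbb{Z}_p$. The distance between two orthomorphisms is the number of $x$ at which they differ. *)

theory Defs
  imports "HOL-Number_Theory.Number_Theory"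
begin

text \<open>We model Z_p as the carrier set {0..<p} of natural numbers with arithmetic mod p.\<close>

definition orthomorphism :: "nat \<Rightarrow> (nat \<Rightarrow> nat) \<Rightarrow> bool" where
  "orthomorphism p \<psi> \<longleftrightarrow>
     bij_betw \<psi> {0..<p} {0..<p} \<and>
     bij_betw (\<lambda>x. (\<psi> x + p - x) mod p) {0..<p} {0..<p}"

definition orth_dist :: "nat \<Rightarrow> (nat \<Rightarrow> nat) \<Rightarrow> (nat \<Rightarrow> nat) \<Rightarrow> nat" where
  "orth_dist p \<psi> \<psi>' = card {x \<in> {0..<p}. \<psi> x \<noteq> \<psi>' x}"

definition inv_mod :: "nat \<Rightarrow> nat \<Rightarrow> nat" where
  "inv_mod p k = (LEAST j. [k * j = 1] (mod p))"

end

theory Submission imports Defs "HOL-Library.FuncSet" begin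

lemma sum_ind: assumes "finite V" "(\<And>z. z \<notin> V \<Longrightarrow> w z = 0)" shows
   "(\<Sum>z\<in>V. (if z = a then t else 0) * w z) = t * (w a :: int)"
  using assms
proof -
  have "(\<Sum>z\<in>V. (if z = a then t else 0) * w z) = (\<Sum>z\<in>V. (if z = a then t * w a else 0))"
    by (rule sum.cong) auto
  thus ?thesis using assms by (cases "a \<in> V") (auto simp: sum.delta)
qed

lemma stabilize:
  fixes V :: "nat set" and K :: nat and \<alpha> \<beta> :: "nat \<Rightarrow> nat" and w :: "nat \<Rightarrow> int"
    and h :: "nat \<Rightarrow> nat" and p :: int
  assumes fin: "finite V"
    and w0: "\<And>z. z \<notin> V \<Longrightarrow> w z = 0" and h0: "\<And>z. z \<notin> V \<Longrightarrow> h z = 0"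
    and wc: "\<And>y. y \<in> V \<Longrightarrow> [int K * w y = w (\<alpha> y) + int (K-1) * w (\<beta> y)] (mod p)"
    and hc: "\<And>y. y \<in> V \<Longrightarrow> h (\<alpha> y) + (K-1) * h (\<beta> y) < K * h y"
  shows "(\<forall>z. z\<notin>V \<longrightarrow> c z = 0) \<Longrightarrow> \<exists>c'. (\<forall>z. z\<notin>V \<longrightarrow> c' z = 0) \<and> (\<forall>z\<in>V. c' z < K)
     \<and> [(\<Sum>z\<in>V. int (c' z) * w z) = (\<Sum>z\<in>V. int (c z) * w z)] (mod p)"
proof (induction "\<Sum>z\<in>V. c z * h z" arbitrary: c rule: less_induct)
  case less
  show ?case
  proof (cases "\<forall>z\<in>V. c z < K")
    case True
    show ?thesis using less.prems True by (intro exI[of _ c] conjI cong_refl) auto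
  next
    case False
    then obtain y where y: "y \<in> V" "K \<le> c y" by (auto simp: not_less)
    have K1: "K \<ge> 1" using hc[OF y(1)] by (cases K) auto
    define c1 where "c1 = (\<lambda>z. if z \<in> V then c z + (if z = \<alpha> y then 1 else 0) + (if z = \<beta> y then K-1 else 0) - (if z = y then K else 0) else 0)"
    have c1i: "int (c1 z) = int (c z) + (if z = \<alpha> y then 1 else 0) + (if z = \<beta> y then int K - 1 else 0) - (if z = y then int K else 0)"
      if "z \<in> V" for z using that y K1 unfolding c1_def
      by (auto simp: of_nat_diff)
    have s1: "(\<Sum>z\<in>V. int (c1 z) * w z) = (\<Sum>z\<in>V. int (c z) * w z) + w (\<alpha> y) + (int K - 1) * w (\<beta> y) - int K * w y"
    proof -
      have "(\<Sum>z\<in>V. int (c1 z) * w z) = (\<Sum>z\<in>V. int (c z) * w z + (if z = \<alpha> y then 1 else 0) * w z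
          + (if z = \<beta> y then int K - 1 else 0) * w z - (if z = y then int K else 0) * w z)"
        by (rule sum.cong) (auto simp: c1i algebra_simps)
      also have "\<dots> = (\<Sum>z\<in>V. int (c z) * w z) + w (\<alpha> y) + (int K - 1) * w (\<beta> y) - int K * w y"
        by (simp add: sum.distrib sum_subtractf sum_ind[OF fin w0])
      finally show ?thesis .
    qed
    have s2: "int (\<Sum>z\<in>V. c1 z * h z) = int (\<Sum>z\<in>V. c z * h z) + int (h (\<alpha> y)) + (int K - 1) * int (h (\<beta> y)) - int K * int (h y)"
    proof -
      have "int (\<Sum>z\<in>V. c1 z * h z) = (\<Sum>z\<in>V. int (c1 z) * int (h z))" by simp
      also have "\<dots> = (\<Sum>z\<in>V. int (c z) * int (h z) + (if z = \<alpha> y then 1 else 0) * int (h z)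
          + (if z = \<beta> y then int K - 1 else 0) * int (h z) - (if z = y then int K else 0) * int (h z))"
        by (rule sum.cong) (auto simp: c1i algebra_simps)
      also have "\<dots> = int (\<Sum>z\<in>V. c z * h z) + int (h (\<alpha> y)) + (int K - 1) * int (h (\<beta> y)) - int K * int (h y)"
        by (simp add: sum.distrib sum_subtractf sum_ind[OF fin, of "\<lambda>z. int (h z)"] h0)
      finally show ?thesis .
    qed
    have Ki: "int (K - 1) = int K - 1" using K1 by (simp add: of_nat_diff)
    have "int (h (\<alpha> y) + (K-1) * h (\<beta> y)) < int (K * h y)"
      by (simp only: of_nat_less_iff) (rule hc[OF y(1)])
    hence "int (h (\<alpha> y)) + int (K-1) * int (h (\<beta> y)) < int K * int (h y)"
      by (simp only: of_nat_add of_nat_mult)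
    hence "int (h (\<alpha> y)) + (int K - 1) * int (h (\<beta> y)) < int K * int (h y)"
      by (simp only: Ki)
    hence lt: "(\<Sum>z\<in>V. c1 z * h z) < (\<Sum>z\<in>V. c z * h z)" using s2 by linarith
    have sup: "\<forall>z. z\<notin>V \<longrightarrow> c1 z = 0" by (simp add: c1_def)
    obtain c' where c': "\<forall>z. z\<notin>V \<longrightarrow> c' z = 0" "\<forall>z\<in>V. c' z < K"
      "[(\<Sum>z\<in>V. int (c' z) * w z) = (\<Sum>z\<in>V. int (c1 z) * w z)] (mod p)"
      using less.hyps[OF lt sup] by blast
    have "[(\<Sum>z\<in>V. int (c1 z) * w z) = (\<Sum>z\<in>V. int (c z) * w z)] (mod p)"
    proof -
      have d: "p dvd (int K * w y - (w (\<alpha> y) + (int K - 1) * w (\<beta> y)))"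
        using wc[OF y(1)] unfolding Ki by (simp only: cong_iff_dvd_diff)
      have "(\<Sum>z\<in>V. int (c1 z) * w z) - (\<Sum>z\<in>V. int (c z) * w z)
          = - (int K * w y - (w (\<alpha> y) + (int K - 1) * w (\<beta> y)))"
        unfolding s1 by (simp add: algebra_simps)
      hence "p dvd (\<Sum>z\<in>V. int (c1 z) * w z) - (\<Sum>z\<in>V. int (c z) * w z)"
        using d by (simp only: dvd_minus_iff)
      then show ?thesis by (simp only: cong_iff_dvd_diff)
    qed
    from cong_trans[OF c'(3) this] show ?thesis using c'(1,2) by blast
  qed
qed

lemma card_stable:
  fixes V :: "nat set" assumes "finite V"
  shows "finite {c. (\<forall>z. z\<notin>V \<longrightarrow> c z = 0) \<and> (\<forall>z\<in>V. c z < (K::nat))}"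
    and "card {c. (\<forall>z. z\<notin>V \<longrightarrow> c z = 0) \<and> (\<forall>z\<in>V. c z < K)} \<le> K ^ card V"
proof -
  let ?St = "{c. (\<forall>z. z\<notin>V \<longrightarrow> c z = 0) \<and> (\<forall>z\<in>V. c z < K)}"
  let ?f = "\<lambda>g z. if z \<in> V then g z else (0::nat)"
  have sub: "?St \<subseteq> ?f ` (PiE V (\<lambda>_. {..<K}))"
  proof
    fix c assume c: "c \<in> ?St"
    have "restrict c V \<in> PiE V (\<lambda>_. {..<K})" using c by auto
    moreover have "c = ?f (restrict c V)" using c by (auto simp: fun_eq_iff)
    ultimately show "c \<in> ?f ` (PiE V (\<lambda>_. {..<K}))" by blast
  qed
  have fin: "finite (PiE V (\<lambda>_. {..<K}))" using assms by (simp add: finite_PiE)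
  show "finite ?St" using finite_subset[OF sub finite_imageI[OF fin]] .
  have "card ?St \<le> card (?f ` (PiE V (\<lambda>_. {..<K})))" using card_mono[OF finite_imageI[OF fin] sub] .
  also have "\<dots> \<le> card (PiE V (\<lambda>_. {..<K}))" using card_image_le[OF fin] .
  also have "\<dots> = K ^ card V" using assms by (simp add: card_PiE)
  finally show "card ?St \<le> K ^ card V" .
qed

lemma core:
  fixes S :: "nat set" and K p :: nat and \<alpha> \<beta> :: "nat \<Rightarrow> nat"
  assumes pr: "prime p" and finS: "finite S" and ne: "S \<noteq> {}" and Sp: "S \<subseteq> {0..<p}" and K2: "K \<ge> 2"
    and a_in: "\<And>y. y \<in> S \<Longrightarrow> \<alpha> y \<in> S" and b_in: "\<And>y. y \<in> S \<Longrightarrow> \<beta> y \<in> S"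
    and a_ne: "\<And>y. y \<in> S \<Longrightarrow> \<alpha> y \<noteq> y"
    and eq: "\<And>y. y \<in> S \<Longrightarrow> [K * y = \<alpha> y + (K-1) * \<beta> y] (mod p)"
  shows "p \<le> K ^ (card S - 1)"
proof -
  define cl where "cl C \<longleftrightarrow> C \<subseteq> S \<and> C \<noteq> {} \<and> (\<forall>y\<in>C. \<alpha> y \<in> C \<and> \<beta> y \<in> C)" for C
  have "cl S" using ne a_in b_in by (auto simp: cl_def)
  then obtain C where C: "cl C" and Cmin: "\<And>C'. cl C' \<Longrightarrow> card C \<le> card C'"
    using ex_has_least_nat[of cl S card] by blast
  have CS: "C \<subseteq> S" and Cne: "C \<noteq> {}" and Ccl: "\<And>y. y \<in> C \<Longrightarrow> \<alpha> y \<in> C \<and> \<beta> y \<in> C"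
    using C by (auto simp: cl_def)
  have finC: "finite C" using CS finS finite_subset by blast
  obtain r where r: "r \<in> C" using Cne by blast
  define E where "E y z \<longleftrightarrow> z = \<alpha> y \<or> z = \<beta> y" for y z
  have reach: "E\<^sup>*\<^sup>* y r" if y: "y \<in> C" for y
  proof -
    define R where "R = {z. E\<^sup>*\<^sup>* y z}"
    have RC: "R \<subseteq> C"
    proof
      fix z assume "z \<in> R"
      hence "E\<^sup>*\<^sup>* y z" by (simp add: R_def)
      then show "z \<in> C"
        by (induction rule: rtranclp_induct) (use y Ccl in \<open>auto simp: E_def\<close>)
    qed
    have "\<alpha> z \<in> R \<and> \<beta> z \<in> R" if "z \<in> R" for z
      using that by (auto simp: R_def E_def intro: rtranclp.rtrancl_into_rtrancl)
    moreover have "R \<subseteq> S" using RC CS by blast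
    moreover have "R \<noteq> {}" by (auto simp: R_def)
    ultimately have "cl R" unfolding cl_def by blast
    hence "card C \<le> card R" by (rule Cmin)
    hence "R = C" using RC finC by (simp add: card_seteq)
    thus ?thesis using r by (auto simp: R_def)
  qed
  define depth where "depth y = (LEAST n. (E ^^ n) y r)" for y
  have dep: "(E ^^ depth y) y r" if yC: "y \<in> C" for y
  proof -
    obtain n where "(E ^^ n) y r" using rtranclp_imp_relpowp[OF reach[OF yC]] by blast
    then show ?thesis unfolding depth_def by (rule LeastI)
  qed
  have dep_r: "depth r = 0" unfolding depth_def by (rule Least_eq_0) simp
  define D where "D = Max (depth ` C)"
  have depD: "depth y \<le> D" if "y \<in> C" for y
    unfolding D_def using finC that by simp
  have step: "\<exists>z. E y z \<and> depth z < depth y" if "y \<in> C" "y \<noteq> r" for y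
  proof -
    have d: "(E ^^ depth y) y r" using dep[OF that(1)] .
    have "depth y \<noteq> 0" using d that(2) by (cases "depth y") auto
    then obtain n where n: "depth y = Suc n" by (cases "depth y") auto
    then obtain z where "E y z" "(E ^^ n) z r" using d relpowp_Suc_D2[of n E y r] by auto
    moreover have "depth z \<le> n" unfolding depth_def using \<open>(E ^^ n) z r\<close> by (rule Least_le)
    ultimately show ?thesis using n by auto
  qed
  define V where "V = C - {r}"
  have finV: "finite V" using finC by (simp add: V_def)
  obtain y0 where y0: "y0 \<in> V" using a_ne[of r] Ccl[OF r] r CS unfolding V_def by blast
  define w where "w z = (if z \<in> V then int z - int r else 0)" for z
  define H where "H = (K+1)^D"
  define h where "h z = (if z \<in> V then H - (K+1)^(D - depth z) else 0)" for z
  have wC: "w z = int z - int r" if "z \<in> C" for z using that by (auto simp: w_def V_def)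
  have hC: "h z = H - (K+1)^(D - depth z)" if "z \<in> C" for z using that dep_r
    by (auto simp: h_def V_def H_def)
  have wc: "[int K * w y = w (\<alpha> y) + int (K-1) * w (\<beta> y)] (mod int p)" if "y \<in> V" for y
  proof -
    have yC: "y \<in> C" using that by (simp add: V_def)
    have e: "[int K * int y = int (\<alpha> y) + int (K-1) * int (\<beta> y)] (mod int p)"
      using eq[of y] yC CS by (auto simp: cong_int_iff[symmetric])
    have "[int K * int y - int K * int r = int (\<alpha> y) + int (K-1) * int (\<beta> y) - (1 + int (K-1)) * int r] (mod int p)"
      using K2 by (intro cong_diff e) (auto simp: of_nat_diff)
    then show ?thesis using yC Ccl[OF yC] by (simp add: wC algebra_simps)
  qed
  have hC': "int (h u) = int H - int ((K+1)^(D - depth u))" if "u \<in> C" for u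
  proof -
    have "(K+1)^(D - depth u) \<le> H" unfolding H_def by (intro power_increasing) auto
    thus ?thesis using hC[OF that] by (simp add: of_nat_diff)
  qed
  have hle: "int (h u) \<le> int H" if "u \<in> C" for u using hC'[OF that] by simp
  have hc: "h (\<alpha> y) + (K-1) * h (\<beta> y) < K * h y" if "y \<in> V" for y
  proof -
    have yC: "y \<in> C" "y \<noteq> r" using that by (auto simp: V_def)
    obtain z where z: "E y z" "depth z < depth y" using step[OF yC] by blast
    have zC: "z \<in> C" using z(1) Ccl[OF yC(1)] by (auto simp: E_def)
    define e where "e = (K+1)^(D - depth y)"
    have e1: "e \<ge> 1" by (simp add: e_def)
    have dy: "depth y \<le> D" using depD[OF yC(1)] .
    have "(K+1) * e = (K+1)^(D - depth y + 1)" by (simp add: e_def)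
    also have "\<dots> \<le> (K+1)^(D - depth z)" using z(2) dy by (intro power_increasing) auto
    finally have F: "(K+1) * e \<le> (K+1)^(D - depth z)" .
    have "int ((K+1)*e) \<le> int ((K+1)^(D - depth z))" using F by (simp only: of_nat_le_iff)
    moreover have "int ((K+1)*e) = (int K + 1) * int e" by (simp add: algebra_simps)
    ultimately have ze: "int (h z) + (int K + 1) * int e \<le> int H"
      using hC'[OF zC] by linarith
    have ye: "int (h y) + int e = int H" using hC'[OF yC(1)] by (simp add: e_def)
    have aC: "\<alpha> y \<in> C" and bC: "\<beta> y \<in> C" using Ccl[OF yC(1)] by auto
    have ha: "int (h (\<alpha> y)) \<le> int H" using hle[OF aC] .
    have hb: "int (h (\<beta> y)) \<le> int H" using hle[OF bC] .
    have Ki: "int (K - 1) = int K - 1" using K2 by (simp add: of_nat_diff)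
    have K2i: "int K \<ge> 2" using K2 by simp
    have "int (h (\<alpha> y)) + (int K - 1) * int (h (\<beta> y)) < int K * int (h y)"
    proof (cases "z = \<alpha> y")
      case True
      have m: "(int K - 1) * int (h (\<beta> y)) \<le> (int K - 1) * int H"
        using hb K2i by (intro mult_left_mono) auto
      have "int K * int (h y) = int K * int H - int K * int e" using ye by (simp add: algebra_simps flip: ye)
      moreover have "(int K - 1) * int H = int K * int H - int H" by (simp add: algebra_simps)
      moreover have "(int K + 1) * int e = int K * int e + int e" by (simp add: algebra_simps)
      moreover have ze': "int (h (\<alpha> y)) + (int K + 1) * int e \<le> int H" using ze True by simp
      ultimately show ?thesis using m e1 by linarith
    next
      case False
      hence zb: "z = \<beta> y" using z(1) by (auto simp: E_def)
      have m: "(int K - 1) * int (h (\<beta> y)) \<le> (int K - 1) * (int H - (int K + 1) * int e)"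
        using ze zb K2i by (intro mult_left_mono) auto
      have m2: "(int K + 1) * int e \<le> (int K - 1) * ((int K + 1) * int e)"
        using mult_right_mono[of 1 "int K - 1" "(int K + 1) * int e"] K2i by simp
      have "int K * int (h y) = int K * int H - int K * int e" using ye by (simp add: algebra_simps flip: ye)
      moreover have "(int K - 1) * (int H - (int K + 1) * int e) = int K * int H - int H - (int K - 1) * ((int K + 1) * int e)"
        by (simp add: algebra_simps)
      moreover have "(int K + 1) * int e = int K * int e + int e" by (simp add: algebra_simps)
      ultimately show ?thesis using m m2 ha e1 by linarith
    qed
    then have "int (h (\<alpha> y) + (K-1) * h (\<beta> y)) < int (K * h y)" using Ki by simp
    then show ?thesis by linarith
  qed
  have stab: "\<exists>c'. (\<forall>z. z\<notin>V \<longrightarrow> c' z = 0) \<and> (\<forall>z\<in>V. c' z < K)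
     \<and> [(\<Sum>z\<in>V. int (c' z) * w z) = (\<Sum>z\<in>V. int (c z) * w z)] (mod int p)"
    if "\<forall>z. z\<notin>V \<longrightarrow> c z = 0" for c
    by (rule stabilize[OF finV _ _ wc hc that]) (auto simp: w_def h_def)
  show ?thesis
  proof (rule ccontr)
    assume "\<not> ?thesis"
    hence lt: "K ^ (card S - 1) < p" by simp
    let ?St = "{c. (\<forall>z. z\<notin>V \<longrightarrow> c z = 0) \<and> (\<forall>z\<in>V. c z < K)}"
    define cfg where "cfg m = (\<lambda>z. if z = y0 then m else (0::nat))" for m
    define st where "st m = (SOME c'. (\<forall>z. z\<notin>V \<longrightarrow> c' z = 0) \<and> (\<forall>z\<in>V. c' z < K)
     \<and> [(\<Sum>z\<in>V. int (c' z) * w z) = (\<Sum>z\<in>V. int (cfg m z) * w z)] (mod int p))" for m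
    have stP: "st m \<in> ?St \<and> [(\<Sum>z\<in>V. int (st m z) * w z) = (\<Sum>z\<in>V. int (cfg m z) * w z)] (mod int p)" for m
    proof -
      have "\<forall>z. z\<notin>V \<longrightarrow> cfg m z = 0" using y0 by (auto simp: cfg_def)
      from someI_ex[OF stab[OF this]] show ?thesis unfolding st_def by blast
    qed
    have cfgs: "(\<Sum>z\<in>V. int (cfg m z) * w z) = int m * w y0" for m
    proof -
      have "(\<Sum>z\<in>V. int (cfg m z) * w z) = (\<Sum>z\<in>V. (if z = y0 then int m else 0) * w z)"
        by (rule sum.cong) (auto simp: cfg_def)
      also have "\<dots> = int m * w y0" by (rule sum_ind[OF finV]) (simp add: w_def)
      finally show ?thesis .
    qed
    have cardV: "card V \<le> card S - 1"
    proof -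
      have "card V = card C - 1" using r finC by (simp add: V_def)
      moreover have "card C \<le> card S" using CS finS card_mono by blast
      ultimately show ?thesis by simp
    qed
    have "card ?St \<le> K ^ card V" by (rule card_stable(2)[OF finV])
    also have "\<dots> \<le> K ^ (card S - 1)" using K2 cardV by (intro power_increasing) auto
    finally have "card ?St < card {0..<p}" using lt by simp
    hence "\<not> inj_on st {0..<p}"
      using card_inj_on_le[of st "{0..<p}" ?St] card_stable(1)[OF finV] stP by force
    then obtain m1 m2 where m: "m1 < p" "m2 < p" "m1 \<noteq> m2" "st m1 = st m2"
      by (auto simp: inj_on_def)
    have "[int m1 * w y0 = int m2 * w y0] (mod int p)"
      using stP[of m1] stP[of m2] m(4) cfgs by (metis cong_sym cong_trans)
    hence dv: "int p dvd (int m1 - int m2) * w y0" by (simp add: cong_iff_dvd_diff algebra_simps)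
    have pp: "prime (int p)" using pr by simp
    have y0C: "y0 \<in> C" "y0 \<noteq> r" using y0 by (auto simp: V_def)
    have "\<not> int p dvd (int m1 - int m2)"
    proof
      assume "int p dvd (int m1 - int m2)"
      hence "[m1 = m2] (mod p)" by (simp add: cong_iff_dvd_diff cong_int_iff[symmetric])
      thus False using m by (simp add: cong_def)
    qed
    moreover have "\<not> int p dvd w y0"
    proof
      assume "int p dvd w y0"
      hence "int p dvd (int y0 - int r)" using wC[OF y0C(1)] by simp
      hence "[y0 = r] (mod p)" by (simp add: cong_iff_dvd_diff cong_int_iff[symmetric])
      thus False using y0C r CS Sp by (auto simp: cong_def subset_iff)
    qed
    ultimately show False using dv prime_dvd_mult_iff[OF pp] by blast
  qed
qed



lemma unit_mod:
  fixes p c :: nat assumes pr: "prime p" and cp: "coprime c p"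
  shows "inj_on (\<lambda>b. c * b mod p) {0..<p}" and "(\<lambda>b. c * b mod p) ` {0..<p} = {0..<p}"
proof -
  show inj: "inj_on (\<lambda>b. c * b mod p) {0..<p}"
  proof (rule inj_onI)
    fix a b assume ab: "a \<in> {0..<p}" "b \<in> {0..<p}" "c * a mod p = c * b mod p"
    hence "[c * a = c * b] (mod p)" by (simp add: cong_def)
    hence "[a = b] (mod p)" using cong_mult_lcancel_nat[OF cp] by simp
    thus "a = b" using ab by (simp add: cong_def)
  qed
  have p0: "p > 0" using pr prime_gt_0_nat by blast
  show "(\<lambda>b. c * b mod p) ` {0..<p} = {0..<p}"
    by (rule endo_inj_surj[OF _ _ inj]) (use p0 in auto)
qed

lemma cop: "prime p \<Longrightarrow> 0 < c \<Longrightarrow> c < p \<Longrightarrow> coprime c (p::nat)"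
  by (metis coprime_commute dvd_imp_le not_le prime_imp_coprime)

theorem theorem6p1:
  fixes p k :: nat and \<phi>' :: "nat \<Rightarrow> nat"
  assumes "prime p" and "odd p"
    and "2 \<le> k" and "k \<le> p - 1"
    and "orthomorphism p \<phi>'"
    and "\<exists>x \<in> {0..<p}. \<phi>' x \<noteq> (k * x) mod p"
  shows "log (real (min k (inv_mod p k))) (real p) + 1
           \<le> real (orth_dist p (\<lambda>x. (k * x) mod p) \<phi>')"
proof -
  note pr = assms(1)
  have p2: "p \<ge> 2" using pr prime_ge_2_nat by blast
  have kp: "0 < k" "k < p" using assms(3,4) p2 by auto
  define \<psi> where "\<psi> x = (\<phi>' x + p - x) mod p" for x
  have bphi: "bij_betw \<phi>' {0..<p} {0..<p}" and bpsi: "bij_betw \<psi> {0..<p} {0..<p}"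
    using assms(5) by (auto simp: orthomorphism_def \<psi>_def[abs_def])
  have injphi: "inj_on \<phi>' {0..<p}" and injpsi: "inj_on \<psi> {0..<p}"
    using bphi bpsi by (simp_all add: bij_betw_def)
  define S where "S = {x \<in> {0..<p}. (k * x) mod p \<noteq> \<phi>' x}"
  have dist: "orth_dist p (\<lambda>x. (k * x) mod p) \<phi>' = card S" by (simp add: orth_dist_def S_def)
  have Sp: "S \<subseteq> {0..<p}" and finS: "finite S" by (auto simp: S_def)
  have Sne: "S \<noteq> {}" using assms(6) by (auto simp: S_def)
  have cpk: "coprime k p" using cop[OF pr kp] .
  have cpk1: "coprime (k-1) p" using cop[OF pr] kp assms(3) by simp
  have phiS: "\<exists>a\<in>S. \<phi>' x = k * a mod p" if xS: "x \<in> S" for x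
  proof -
    have "\<phi>' x \<in> \<phi>' ` {0..<p}" using xS by (auto simp: S_def)
    hence "\<phi>' x \<in> {0..<p}" using bphi by (simp add: bij_betw_def)
    hence "\<phi>' x \<in> (\<lambda>b. k * b mod p) ` {0..<p}" using unit_mod(2)[OF pr cpk] by simp
    then obtain a where a: "a \<in> {0..<p}" "\<phi>' x = k * a mod p" by blast
    have "a \<in> S"
    proof (rule ccontr)
      assume "a \<notin> S"
      hence "\<phi>' a = k * a mod p" using a by (auto simp: S_def)
      hence "\<phi>' a = \<phi>' x" using a by simp
      moreover have "x \<in> {0..<p}" using xS by (simp add: S_def)
      ultimately have "a = x" using a(1) injphi by (simp add: inj_on_def)
      thus False using \<open>a \<notin> S\<close> xS by simp
    qed
    thus ?thesis using a by blast
  qed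
  have psiS: "\<exists>b\<in>S. \<psi> x = (k-1) * b mod p" if xS: "x \<in> S" for x
  proof -
    have "\<psi> x \<in> {0..<p}" using p2 by (simp add: \<psi>_def)
    hence "\<psi> x \<in> (\<lambda>b. (k-1) * b mod p) ` {0..<p}" using unit_mod(2)[OF pr cpk1] by simp
    then obtain b where b: "b \<in> {0..<p}" "\<psi> x = (k-1) * b mod p" by blast
    have "b \<in> S"
    proof (rule ccontr)
      assume "b \<notin> S"
      hence "\<phi>' b = k * b mod p" using b by (auto simp: S_def)
      hence "\<psi> b = ((k * b) mod p + p - b) mod p" by (simp add: \<psi>_def)
      also have "\<dots> = (k-1) * b mod p"
      proof -
        have "b \<le> p" using b by simp
        have "((k * b) mod p + p - b) mod p = ((k*b) mod p + (p - b)) mod p" using \<open>b \<le> p\<close> by simp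
        also have "\<dots> = (k*b + (p - b)) mod p" by (simp add: mod_add_left_eq)
        also have "k*b + (p - b) = (k-1)*b + p" using \<open>b \<le> p\<close> assms(3)
          by (simp add: diff_mult_distrib)
        finally show ?thesis by simp
      qed
      finally have "\<psi> b = \<psi> x" using b by simp
      moreover have "x \<in> {0..<p}" using xS by (simp add: S_def)
      ultimately have "b = x" using b(1) injpsi by (simp add: inj_on_def)
      thus False using \<open>b \<notin> S\<close> xS by simp
    qed
    thus ?thesis using b by blast
  qed
  have aS: "\<exists>x\<in>S. \<phi>' x = k * a mod p" if aS: "a \<in> S" for a
  proof -
    have "k * a mod p \<in> {0..<p}" using p2 by simp
    hence "k * a mod p \<in> \<phi>' ` {0..<p}" using bphi by (simp add: bij_betw_def)
    then obtain x where x: "x \<in> {0..<p}" "\<phi>' x = k * a mod p" by (metis imageE)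
    have "x \<in> S"
    proof (rule ccontr)
      assume "x \<notin> S"
      hence "\<phi>' x = k * x mod p" using x by (auto simp: S_def)
      hence "k * x mod p = k * a mod p" using x by simp
      moreover have "a \<in> {0..<p}" using aS Sp by blast
      ultimately have "x = a" using inj_onD[OF unit_mod(1)[OF pr cpk], of x a] x(1) by simp
      thus False using \<open>x \<notin> S\<close> aS by simp
    qed
    thus ?thesis using x by blast
  qed
  have keyeq: "[k * a = x + (k-1) * b] (mod p)" if "x < p" "\<phi>' x = k * a mod p" "\<psi> x = (k-1) * b mod p" for x a b
  proof -
    have "(x + (k-1)*b) mod p = (x + \<psi> x) mod p" using that by (simp add: mod_add_right_eq)
    also have "\<dots> = (x + (\<phi>' x + p - x)) mod p" by (simp add: \<psi>_def mod_add_right_eq)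
    also have "x + (\<phi>' x + p - x) = \<phi>' x + p" using that by simp
    finally have "(x + (k-1)*b) mod p = \<phi>' x mod p" by simp
    thus ?thesis using that by (simp add: cong_def)
  qed
  define \<alpha>1 where "\<alpha>1 a = (SOME x. x \<in> S \<and> \<phi>' x = k * a mod p)" for a
  define \<beta>1 where "\<beta>1 a = (SOME b. b \<in> S \<and> \<psi> (\<alpha>1 a) = (k-1) * b mod p)" for a
  define \<alpha>2 where "\<alpha>2 x = (SOME a. a \<in> S \<and> \<phi>' x = k * a mod p)" for x
  define \<beta>2 where "\<beta>2 x = (SOME b. b \<in> S \<and> \<psi> x = (k-1) * b mod p)" for x
  have a1: "\<alpha>1 a \<in> S \<and> \<phi>' (\<alpha>1 a) = k * a mod p" if "a \<in> S" for a
    unfolding \<alpha>1_def using aS[OF that] by (metis (mono_tags, lifting) someI_ex)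
  have b1: "\<beta>1 a \<in> S \<and> \<psi> (\<alpha>1 a) = (k-1) * \<beta>1 a mod p" if "a \<in> S" for a
    unfolding \<beta>1_def using psiS[of "\<alpha>1 a"] a1[OF that] by (metis (mono_tags, lifting) someI_ex)
  have a2: "\<alpha>2 x \<in> S \<and> \<phi>' x = k * \<alpha>2 x mod p" if "x \<in> S" for x
    unfolding \<alpha>2_def using phiS[OF that] by (metis (mono_tags, lifting) someI_ex)
  have b2: "\<beta>2 x \<in> S \<and> \<psi> x = (k-1) * \<beta>2 x mod p" if "x \<in> S" for x
    unfolding \<beta>2_def using psiS[OF that] by (metis (mono_tags, lifting) someI_ex)
  have notfix: "\<phi>' x \<noteq> k * x mod p" if "x \<in> S" for x using that by (auto simp: S_def)
  have eq1: "[k * a = \<alpha>1 a + (k-1) * \<beta>1 a] (mod p)" if "a \<in> S" for a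
    using keyeq[of "\<alpha>1 a" a "\<beta>1 a"] a1[OF that] b1[OF that] Sp by auto
  have bound1: "p \<le> k ^ (card S - 1)"
  proof (rule core[OF pr finS Sne Sp assms(3)])
    show "\<alpha>1 y \<in> S" "\<beta>1 y \<in> S" if "y \<in> S" for y using a1[OF that] b1[OF that] by auto
    show "\<alpha>1 y \<noteq> y" if "y \<in> S" for y using a1[OF that] notfix[OF that] by auto
    show "[k * y = \<alpha>1 y + (k-1) * \<beta>1 y] (mod p)" if "y \<in> S" for y using eq1[OF that] .
  qed
  define i where "i = inv_mod p k"
  have "\<exists>j. [k * j = 1] (mod p)" using cong_solve_coprime_nat[OF cpk] by simp
  hence ki: "[k * i = 1] (mod p)" unfolding i_def inv_mod_def by (rule LeastI_ex)
  have i2: "i \<ge> 2"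
  proof (rule ccontr)
    assume "\<not> i \<ge> 2"
    hence "i = 0 \<or> i = 1" by auto
    thus False using ki p2 kp assms(3) by (auto simp: cong_def)
  qed
  have eq2: "[i * x = \<alpha>2 x + (i-1) * \<beta>2 x] (mod p)" if "x \<in> S" for x
  proof -
    have e: "[k * \<alpha>2 x = x + (k-1) * \<beta>2 x] (mod p)"
      using keyeq[of x "\<alpha>2 x" "\<beta>2 x"] a2[OF that] b2[OF that] Sp that by auto
    have d1: "int p dvd int k * int (\<alpha>2 x) - (int x + (int k - 1) * int (\<beta>2 x))"
      using e assms(3) by (simp add: cong_int_iff[symmetric] cong_iff_dvd_diff of_nat_diff)
    have d2: "int p dvd int k * int i - 1"
      using ki by (simp add: cong_int_iff[symmetric] cong_iff_dvd_diff)
    have "int i * int x - (int (\<alpha>2 x) + (int i - 1) * int (\<beta>2 x))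
       = (- int i) * (int k * int (\<alpha>2 x) - (int x + (int k - 1) * int (\<beta>2 x)))
         + (int k * int i - 1) * (int (\<alpha>2 x) - int (\<beta>2 x))"
      by (simp add: algebra_simps)
    hence "int p dvd int i * int x - (int (\<alpha>2 x) + (int i - 1) * int (\<beta>2 x))"
      using d1 d2 by (metis dvd_add dvd_mult dvd_mult2)
    thus ?thesis using i2
      by (simp add: cong_int_iff[symmetric] cong_iff_dvd_diff of_nat_diff)
  qed
  have bound2: "p \<le> i ^ (card S - 1)"
  proof (rule core[OF pr finS Sne Sp i2])
    show "\<alpha>2 y \<in> S" "\<beta>2 y \<in> S" if "y \<in> S" for y using a2[OF that] b2[OF that] by auto
    show "\<alpha>2 y \<noteq> y" if "y \<in> S" for y using a2[OF that] notfix[OF that] by auto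
    show "[i * y = \<alpha>2 y + (i-1) * \<beta>2 y] (mod p)" if "y \<in> S" for y using eq2[OF that] .
  qed
  define K where "K = min k i"
  have K2: "K \<ge> 2" using i2 assms(3) by (simp add: K_def)
  have bd: "p \<le> K ^ (card S - 1)" using bound1 bound2 by (simp add: K_def min_def)
  have d1: "card S \<ge> 1" using finS Sne by (simp add: Suc_le_eq card_gt_0_iff)
  have "real p \<le> real K ^ (card S - 1)" using bd by (metis of_nat_le_iff of_nat_power)
  hence "log (real K) (real p) \<le> log (real K) (real K ^ (card S - 1))"
    using K2 p2 by (subst log_le_cancel_iff) auto
  also have "\<dots> = real (card S - 1)" using K2 by (simp add: log_nat_power)
  finally show ?thesis using d1 by (simp add: dist K_def i_def of_nat_diff)
qed
end
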